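(* Let $\mathcal{A}$ be a finite or countable alphabet, $\mathcal{M}$ a countable set of probability measures on $\mathcal{A}^\infty$, $w:\mathcal{M}\to(0,1]$ a prior with $\sum_{\nu\in\mathcal{M}} w_\nu = 1$, $\xi$ the Bayes mixture, and $\mu\in\mathcal{M}$. For all $\delta\in(0,1)$, with $\mu$-probability at least $1-\delta$, $$D_\infty \le e\cdot \ln\frac{6}{\delta}\cdot\left(\ln\frac{2}{\delta}+\ln\frac{1}{w_\mu}\right).$$
   Context: $\mathcal{A}^\infty$ is the set of infinite sequences over $\mathcal{A}$, equipped with the $\sigma$-algebra generated by the cylinder sets $\Gamma_x=\{x\omega:\omega\in\mathcal{A}^\infty\}$, $x$ a finite string. For a probability measure $\rho$ write $\rho(x):=\rho(\Gamma_x)$ and $\rho(y|x):=\rho(xy)/\rho(x)$. The Bayes mixture is $\xi(A):=\sum_{\nu\in\mathcal{M}} w_\nu\nu(A)$. Logarithms are natural. For a finite string $x$, the KL divergence between predictive distributions is $d_x(\mu,\xi):=\sum_{a\in\mathcal{A}}\mu(a|x)\ln\frac{\mu(a|x)}{\xi(a|x)}$. For $\omega\in\mathcal{A}^\infty$ let $\omega_{<t}=\omega_1\cdots\omega_{t-1}$, $d_t(\omega):=d_{\omega_{<t}}(\mu,\xi)$ and $D_\infty:=\sum_{t=1}^\infty d_t$. *)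

theory Defs
  imports "HOL-Probability.Probability"
begin

text \<open>Infinite sequences over the alphabet 'a are streams, with the sigma-algebra
  of the stream space over the discrete alphabet (generated by cylinders).\<close>

abbreviation seq_space :: "'a stream measure" where
  "seq_space \<equiv> stream_space (count_space UNIV)"

definition cyl :: "'a list \<Rightarrow> 'a stream set" where
  "cyl x = {\<omega>. stake (length x) \<omega> = x}"

definition mcyl :: "'a stream measure \<Rightarrow> 'a list \<Rightarrow> real" where
  "mcyl \<rho> x = measure \<rho> (cyl x)"

definition mix :: "'a stream measure set \<Rightarrow> ('a stream measure \<Rightarrow> real) \<Rightarrow> 'a list \<Rightarrow> real" where
  "mix M w x = (\<Sum>\<^sub>\<infinity>\<nu>\<in>M. w \<nu> * mcyl \<nu> x)"

definition dKL :: "('a list \<Rightarrow> real) \<Rightarrow> ('a list \<Rightarrow> real) \<Rightarrow> 'a list \<Rightarrow> real" where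
  "dKL m xi x = (\<Sum>\<^sub>\<infinity>a\<in>UNIV.
      (m (x @ [a]) / m x) * ln ((m (x @ [a]) / m x) / (xi (x @ [a]) / xi x)))"

definition Dinf :: "('a list \<Rightarrow> real) \<Rightarrow> ('a list \<Rightarrow> real) \<Rightarrow> 'a stream \<Rightarrow> ennreal" where
  "Dinf m xi \<omega> = (\<Sum>t. ennreal (dKL m xi (stake t \<omega>)))"

end

theory Submission
  imports Defs
begin


lemma bridge1:
  fixes f :: "'b \<Rightarrow> real"
  assumes "\<And>x. x \<in> A \<Longrightarrow> f x \<ge> 0" "f summable_on A"
  shows "(\<integral>\<^sup>+x. ennreal (f x) \<partial>count_space A) = ennreal (infsum f A)"
proof -
  have "Infinite_Sum.abs_summable_on f A" using assms(2) summable_on_iff_abs_summable_on_real by blast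
  then have a: "Infinite_Set_Sum.abs_summable_on f A" using abs_summable_equivalent by blast
  show ?thesis using nn_integral_conv_infsetsum[OF a assms(1)] infsetsum_infsum[OF a] by simp
qed

lemma bridge2:
  fixes f :: "'b \<Rightarrow> real"
  assumes "\<And>x. x \<in> A \<Longrightarrow> f x \<ge> 0" "(\<integral>\<^sup>+x. ennreal (f x) \<partial>count_space A) < \<infinity>"
  shows "f summable_on A"
proof -
  have "integrable (count_space A) f"
    by (rule integrableI_nonneg) (use assms in \<open>auto simp: AE_count_space\<close>)
  then have "Infinite_Set_Sum.abs_summable_on f A" by (simp add: Infinite_Set_Sum.abs_summable_on_def)
  then have "Infinite_Sum.abs_summable_on f A" using abs_summable_equivalent by blast
  then show ?thesis using abs_summable_summable by blast
qed

lemma bridge3: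
  fixes f :: "'b \<Rightarrow> real"
  assumes "\<And>x. x \<in> A \<Longrightarrow> f x \<ge> 0" "(\<integral>\<^sup>+x. ennreal (f x) \<partial>count_space A) = ennreal s" "s \<ge> 0"
  shows "(f has_sum s) A"
proof -
  have s: "f summable_on A" by (rule bridge2) (use assms in auto)
  have "ennreal (infsum f A) = ennreal s" using bridge1[OF assms(1) s] assms(2) by simp
  moreover have "infsum f A \<ge> 0" using assms(1) infsum_nonneg by blast
  ultimately have "infsum f A = s" using assms(3) by simp
  then show ?thesis using s has_sum_infsum by blast
qed

lemma cyl_eq: "cyl x = stake (length x) -` {x} \<inter> space seq_space"
  by (auto simp: cyl_def space_stream_space streams_UNIV)

lemma cyl_sets: "sets \<nu> = sets (seq_space :: ('a::countable) stream measure) \<Longrightarrow> cyl (x::'a list) \<in> sets \<nu>"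
  unfolding cyl_eq by (simp add: measurable_sets[OF measurable_stake])

lemma cyl_Nil: "cyl [] = UNIV" by (simp add: cyl_def)

lemma cyl_snoc: "cyl (x@[a]) = cyl x \<inter> {\<omega>. \<omega> !! length x = a}"
proof -
  have "\<And>\<omega>. stake (Suc (length x)) \<omega> = x @ [a] \<longleftrightarrow> stake (length x) \<omega> = x \<and> \<omega> !! length x = a"
    by (simp only: stake_Suc) auto
  then show ?thesis by (auto simp: cyl_def simp del: stake.simps)
qed

lemma cyl_UN: "cyl x = (\<Union>a. cyl (x@[a]))"
  by (auto simp: cyl_snoc)

lemma cyl_disj: "disjoint_family_on (\<lambda>a. cyl (x@[a])) UNIV"
  by (auto simp: disjoint_family_on_def cyl_snoc)

lemma emeasure_cyl_split:
  assumes "sets \<nu> = sets (seq_space :: ('a::countable) stream measure)"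
  shows "emeasure \<nu> (cyl (x::'a list)) = (\<integral>\<^sup>+a. emeasure \<nu> (cyl (x@[a])) \<partial>count_space UNIV)"
proof -
  have "emeasure \<nu> (\<Union>a\<in>UNIV. cyl (x@[a])) = (\<integral>\<^sup>+a. emeasure \<nu> (cyl (x@[a])) \<partial>count_space UNIV)"
    by (rule emeasure_UN_countable) (auto simp: cyl_sets[OF assms] cyl_disj)
  then show ?thesis using cyl_UN[of x] by simp
qed

lemma countable_len: "countable {x::('a::countable) list. length x = n}"
  by (rule countable_subset[of _ UNIV]) auto

lemma L1:
  assumes S: "sets \<nu> = sets (seq_space :: ('a::countable) stream measure)"
  shows "(\<integral>\<^sup>+\<omega>. f (stake n \<omega>) \<partial>\<nu>) =
     (\<integral>\<^sup>+x. f x * emeasure \<nu> (cyl x) \<partial>count_space {x::'a list. length x = n})"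
proof -
  have eq: "f (stake n \<omega>) = (\<integral>\<^sup>+x. f x * indicator (cyl x) \<omega> \<partial>count_space {x::'a list. length x = n})" for \<omega>
  proof -
    have "(\<integral>\<^sup>+x. f x * indicator (cyl x) \<omega> \<partial>count_space {x::'a list. length x = n})
       = (\<integral>\<^sup>+x. f x * indicator {stake n \<omega>} x \<partial>count_space {x::'a list. length x = n})"
      by (rule nn_integral_cong) (auto simp: cyl_def split: split_indicator)
    also have "\<dots> = f (stake n \<omega>)"
      by (subst nn_integral_indicator_singleton) auto
    finally show ?thesis by simp
  qed
  have "(\<integral>\<^sup>+\<omega>. f (stake n \<omega>) \<partial>\<nu>) = (\<integral>\<^sup>+\<omega>. (\<integral>\<^sup>+x. f x * indicator (cyl x) \<omega> \<partial>count_space {x::'a list. length x = n}) \<partial>\<nu>)"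
    using eq by simp
  also have "\<dots> = (\<integral>\<^sup>+x. (\<integral>\<^sup>+\<omega>. f x * indicator (cyl x) \<omega> \<partial>\<nu>) \<partial>count_space {x::'a list. length x = n})"
  proof (rule nn_integral_count_space_nn_integral[OF countable_len])
    have [measurable]: "\<And>x. cyl x \<in> sets \<nu>" by (rule cyl_sets[OF S])
    show "\<And>x. x \<in> {x::'a list. length x = n} \<Longrightarrow> (\<lambda>\<omega>. f x * indicator (cyl x) \<omega>) \<in> borel_measurable \<nu>"
      by measurable
  qed
  also have "\<dots> = (\<integral>\<^sup>+x. f x * emeasure \<nu> (cyl x) \<partial>count_space {x::'a list. length x = n})"
    by (rule nn_integral_cong) (simp add: nn_integral_cmult_indicator cyl_sets[OF S])
  finally show ?thesis .
qed

lemma L2: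
  "(\<integral>\<^sup>+y. F y \<partial>count_space {y::('a::countable) list. length y = Suc n}) =
   (\<integral>\<^sup>+x. (\<integral>\<^sup>+a. F (x@[a]) \<partial>count_space UNIV) \<partial>count_space {x::'a list. length x = n})"
proof -
  let ?A = "{x::'a list. length x = n}"
  have bij: "bij_betw (\<lambda>(x,a). x@[a]) (?A \<times> UNIV) {y::'a list. length y = Suc n}"
    unfolding bij_betw_def
  proof
    show "inj_on (\<lambda>(x,a). x@[a]) (?A \<times> UNIV)" by (auto simp: inj_on_def)
    show "(\<lambda>(x,a). x@[a]) ` (?A \<times> UNIV) = {y::'a list. length y = Suc n}"
    proof safe
      fix y :: "'a list" assume "length y = Suc n"
      then show "y \<in> (\<lambda>(x,a). x@[a]) ` (?A \<times> UNIV)"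
        by (intro image_eqI[of _ _ "(butlast y, last y)"]) (auto simp: append_butlast_last_id[symmetric] simp del: append_butlast_last_id, metis append_butlast_last_id list.size(3) nat.simps(3))
    qed auto
  qed
  have "(\<integral>\<^sup>+y. F y \<partial>count_space {y::'a list. length y = Suc n}) = (\<integral>\<^sup>+p. F ((\<lambda>(x,a). x@[a]) p) \<partial>count_space (?A \<times> UNIV))"
    by (rule nn_integral_bij_count_space[OF bij, symmetric])
  also have "count_space (?A \<times> UNIV) = count_space ?A \<Otimes>\<^sub>M count_space (UNIV::'a set)"
    by (rule pair_measure_countable[symmetric]) (auto intro: countable_len)
  also have "(\<integral>\<^sup>+p. F ((\<lambda>(x,a). x@[a]) p) \<partial>(count_space ?A \<Otimes>\<^sub>M count_space (UNIV::'a set)))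
      = (\<integral>\<^sup>+x. (\<integral>\<^sup>+a. F (x@[a]) \<partial>count_space UNIV) \<partial>count_space ?A)"
  proof -
    interpret sigma_finite_measure "count_space (UNIV::'a set)"
      by (rule sigma_finite_measure_count_space_countable) simp
    have m: "(\<lambda>p. F ((\<lambda>(x,a). x@[a]) p)) \<in> borel_measurable (count_space ?A \<Otimes>\<^sub>M count_space (UNIV::'a set))"
      by (subst pair_measure_countable) (auto intro: countable_len)
    show ?thesis using nn_integral_fst[OF m] by simp
  qed
  finally show ?thesis .
qed

lemma scalar_ineq:
  fixes d u \<theta> :: real
  assumes "0 \<le> d" "d \<le> u" "u \<le> 1/\<theta>" "\<theta> > 0"
  shows "exp (\<theta> * d) * (u - d) \<le> u"
proof -
  have "1 - \<theta>*d \<le> exp (-(\<theta>*d))" using exp_ge_add_one_self[of "-(\<theta>*d)"] by simp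
  have u0: "u \<ge> 0" using assms by simp
  have "u*\<theta> \<le> 1" using assms by (simp add: field_simps)
  then have "(u*\<theta>)*d \<le> 1*d" using assms(1) by (rule mult_right_mono)
  then have "u - d \<le> u * (1 - \<theta>*d)" by (simp add: algebra_simps)
  also have "\<dots> \<le> u * exp (-(\<theta>*d))" using \<open>1 - \<theta>*d \<le> exp (-(\<theta>*d))\<close> u0 by (simp add: mult_left_mono)
  finally have "u - d \<le> u * exp (-(\<theta>*d))" .
  then have "exp (\<theta>*d) * (u - d) \<le> exp (\<theta>*d) * (u * exp (-(\<theta>*d)))" by simp
  also have "\<dots> = u" by (simp add: exp_minus field_simps)
  finally show ?thesis .
qed

lemma ln_ge_1_minus_inv: "(x::real) > 0 \<Longrightarrow> ln x \<ge> 1 - 1/x"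
proof -
  assume x: "x > 0"
  have "ln (1/x) \<le> 1/x - 1" using ln_le_minus_one[of "1/x"] x by simp
  then show ?thesis using x by (simp add: ln_div)
qed

locale sbm =
  fixes M :: "('a::countable) stream measure set" and w :: "'a stream measure \<Rightarrow> real"
    and \<mu> :: "'a stream measure"
  assumes cM: "countable M"
    and PM: "\<forall>\<nu>\<in>M. prob_space \<nu> \<and> sets \<nu> = sets seq_space"
    and WM: "\<forall>\<nu>\<in>M. 0 < w \<nu> \<and> w \<nu> \<le> 1"
    and hs: "(w has_sum 1) M"
    and muM: "\<mu> \<in> M"
begin

abbreviation "m \<equiv> mcyl \<mu>"
abbreviation "xi \<equiv> mix M w"

lemma prob_nu: "\<nu> \<in> M \<Longrightarrow> prob_space \<nu>" using PM by auto
lemma sets_nu: "\<nu> \<in> M \<Longrightarrow> sets \<nu> = sets seq_space" using PM by auto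

lemma emeasure_cyl: "\<nu> \<in> M \<Longrightarrow> emeasure \<nu> (cyl x) = ennreal (mcyl \<nu> x)"
proof -
  assume n: "\<nu> \<in> M"
  interpret prob_space \<nu> using prob_nu[OF n] .
  show ?thesis unfolding mcyl_def by (simp add: emeasure_eq_measure)
qed

lemma mcyl_nonneg: "mcyl \<nu> x \<ge> 0" by (simp add: mcyl_def)
lemma mcyl_le1: "\<nu> \<in> M \<Longrightarrow> mcyl \<nu> x \<le> 1"
  unfolding mcyl_def using prob_nu prob_space.prob_le_1 by blast

lemma mcyl_Nil: "\<nu> \<in> M \<Longrightarrow> mcyl \<nu> [] = 1"
proof -
  assume n: "\<nu> \<in> M"
  have "space \<nu> = space seq_space" using sets_nu[OF n] by (rule sets_eq_imp_space_eq)
  then have "space \<nu> = UNIV" by (simp add: space_stream_space streams_UNIV)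
  then show ?thesis using prob_space.prob_space[OF prob_nu[OF n]] by (simp add: mcyl_def cyl_Nil)
qed

lemma mcyl_has_sum: "\<nu> \<in> M \<Longrightarrow> ((\<lambda>a. mcyl \<nu> (x@[a])) has_sum mcyl \<nu> x) UNIV"
proof -
  assume n: "\<nu> \<in> M"
  have "(\<integral>\<^sup>+a. ennreal (mcyl \<nu> (x@[a])) \<partial>count_space UNIV) = ennreal (mcyl \<nu> x)"
    using emeasure_cyl_split[OF sets_nu[OF n], of x] by (simp add: emeasure_cyl[OF n])
  then show ?thesis by (intro bridge3) (auto simp: mcyl_nonneg)
qed

lemma mcyl_snoc_le: "\<nu> \<in> M \<Longrightarrow> mcyl \<nu> (x@[a]) \<le> mcyl \<nu> x"
proof -
  assume n: "\<nu> \<in> M"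
  interpret prob_space \<nu> using prob_nu[OF n] .
  show ?thesis unfolding mcyl_def
    by (rule finite_measure_mono) (auto simp: cyl_snoc cyl_sets[OF sets_nu[OF n]])
qed

lemma w_nonneg: "\<nu> \<in> M \<Longrightarrow> w \<nu> \<ge> 0" using WM by auto
lemma wm_nonneg: "\<nu> \<in> M \<Longrightarrow> w \<nu> * mcyl \<nu> x \<ge> 0" by (rule mult_nonneg_nonneg[OF w_nonneg mcyl_nonneg])

lemma w_summable: "w summable_on M" using hs by (simp add: has_sum_imp_summable)

lemma mix_summable: "(\<lambda>\<nu>. w \<nu> * mcyl \<nu> x) summable_on M"
proof -
  have "Infinite_Sum.abs_summable_on w M" using w_summable summable_on_iff_abs_summable_on_real by blast
  then have "Infinite_Sum.abs_summable_on (\<lambda>\<nu>. w \<nu> * mcyl \<nu> x) M"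
    by (rule Infinite_Sum.abs_summable_on_comparison_test) (use w_nonneg mcyl_le1 mcyl_nonneg wm_nonneg in \<open>auto intro!: mult_left_le\<close>)
  then show ?thesis by (rule abs_summable_summable)
qed

lemma mix_has_sum: "((\<lambda>\<nu>. w \<nu> * mcyl \<nu> x) has_sum xi x) M"
  unfolding mix_def using mix_summable by (simp add: has_sum_infsum)

lemma mix_nonneg: "xi x \<ge> 0"
  unfolding mix_def using wm_nonneg by (intro infsum_nonneg) auto

lemma mix_ge: "xi x \<ge> w \<mu> * m x"
proof -
  have "infsum (\<lambda>\<nu>. w \<nu> * mcyl \<nu> x) {\<mu>} \<le> infsum (\<lambda>\<nu>. w \<nu> * mcyl \<nu> x) M"
    by (rule infsum_mono_neutral) (use mix_summable muM wm_nonneg in auto)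
  then show ?thesis by (simp add: mix_def)
qed

lemma mix_le1: "xi x \<le> 1"
proof -
  have "infsum (\<lambda>\<nu>. w \<nu> * mcyl \<nu> x) M \<le> infsum w M"
    by (rule infsum_mono) (use mix_summable w_summable WM mcyl_le1 mcyl_nonneg in \<open>auto intro!: mult_left_le\<close>)
  then show ?thesis using hs by (simp add: mix_def infsumI)
qed

lemma mix_Nil: "xi [] = 1"
proof -
  have "xi [] = infsum w M" unfolding mix_def by (rule infsum_cong) (simp add: mcyl_Nil)
  then show ?thesis using hs by (simp add: infsumI)
qed

lemma mix_split: "((\<lambda>a. xi (x@[a])) has_sum xi x) UNIV"
proof (rule bridge3)
  show "\<And>a. a \<in> UNIV \<Longrightarrow> 0 \<le> xi (x @ [a])" by (rule mix_nonneg)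
  show "0 \<le> xi x" by (rule mix_nonneg)
  have e: "ennreal (xi y) = (\<integral>\<^sup>+\<nu>. ennreal (w \<nu> * mcyl \<nu> y) \<partial>count_space M)" for y
    unfolding mix_def by (rule bridge1[symmetric]) (use mix_summable wm_nonneg in auto)
  have "(\<integral>\<^sup>+a. ennreal (xi (x@[a])) \<partial>count_space UNIV)
     = (\<integral>\<^sup>+a. (\<integral>\<^sup>+\<nu>. ennreal (w \<nu> * mcyl \<nu> (x@[a])) \<partial>count_space M) \<partial>count_space UNIV)"
    by (simp add: e)
  also have "\<dots> = (\<integral>\<^sup>+\<nu>. (\<integral>\<^sup>+a. ennreal (w \<nu> * mcyl \<nu> (x@[a])) \<partial>count_space UNIV) \<partial>count_space M)"
    by (rule nn_integral_count_space_nn_integral[OF cM]) simp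
  also have "\<dots> = (\<integral>\<^sup>+\<nu>. ennreal (w \<nu> * mcyl \<nu> x) \<partial>count_space M)"
  proof (rule nn_integral_cong)
    fix \<nu> assume "\<nu> \<in> space (count_space M)"
    then have n: "\<nu> \<in> M" by simp
    have "(\<integral>\<^sup>+a. ennreal (w \<nu> * mcyl \<nu> (x@[a])) \<partial>count_space UNIV)
        = (\<integral>\<^sup>+a. ennreal (w \<nu>) * ennreal (mcyl \<nu> (x@[a])) \<partial>count_space UNIV)"
      using n by (intro nn_integral_cong) (simp add: ennreal_mult'[OF w_nonneg[OF n]])
    also have "\<dots> = ennreal (w \<nu>) * (\<integral>\<^sup>+a. ennreal (mcyl \<nu> (x@[a])) \<partial>count_space UNIV)"
      by (rule nn_integral_cmult) simp
    also have "\<dots> = ennreal (w \<nu>) * ennreal (mcyl \<nu> x)"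
      using emeasure_cyl_split[OF sets_nu[OF n], of x] by (simp add: emeasure_cyl[OF n])
    finally show "(\<integral>\<^sup>+a. ennreal (w \<nu> * mcyl \<nu> (x@[a])) \<partial>count_space UNIV) = ennreal (w \<nu> * mcyl \<nu> x)"
      using n by (simp add: ennreal_mult'[OF w_nonneg[OF n]])
  qed
  also have "\<dots> = ennreal (xi x)" by (simp add: e)
  finally show "(\<integral>\<^sup>+a. ennreal (xi (x@[a])) \<partial>count_space UNIV) = ennreal (xi x)" .
qed

lemma has_sum_diff':
  fixes f g :: "'b \<Rightarrow> real"
  assumes "(f has_sum a) A" "(g has_sum b) A"
  shows "((\<lambda>x. f x - g x) has_sum (a - b)) A"
proof -
  have "((\<lambda>x. - g x) has_sum (- b)) A" using assms(2) by (simp add: has_sum_uminus)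
  from has_sum_add[OF assms(1) this] show ?thesis by simp
qed

lemma wmu_pos: "w \<mu> > 0" using WM muM by auto

definition V :: "'a list \<Rightarrow> real" where "V y = ln (xi y / (w \<mu> * m y))"

lemma xi_pos: "m y > 0 \<Longrightarrow> xi y > 0"
proof -
  assume "m y > 0"
  then have "w \<mu> * m y > 0" using wmu_pos by simp
  then show ?thesis using mix_ge[of y] by linarith
qed

lemma V_nonneg: "V y \<ge> 0"
proof (cases "m y > 0")
  case True
  have "w \<mu> * m y > 0" using True wmu_pos by simp
  then have "xi y / (w \<mu> * m y) \<ge> 1" using mix_ge[of y] by simp
  then show ?thesis unfolding V_def by simp
next
  case False
  then have "m y = 0" using mcyl_nonneg[of \<mu> y] by simp
  then show ?thesis unfolding V_def by simp
qed

lemma node: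
  assumes mx: "m x > 0"
  shows "dKL m xi x \<ge> 0"
    and "((\<lambda>a. m (x@[a]) * (V (x@[a]) + c)) has_sum (m x * (V x + c - dKL m xi x))) UNIV"
proof -
  define p where "p a = m (x@[a]) / m x" for a
  define q where "q a = xi (x@[a]) / xi x" for a
  define f where "f a = p a * ln (p a / q a)" for a
  have xx: "xi x > 0" using xi_pos[OF mx] .
  have d_eq: "dKL m xi x = infsum f UNIV" unfolding dKL_def f_def p_def q_def by simp
  have p_has: "(p has_sum 1) UNIV"
    using has_sum_cmult_right[OF mcyl_has_sum[OF muM, of x], of "1/m x"] mx
    by (simp add: p_def[abs_def])
  have q_has: "(q has_sum 1) UNIV"
    using has_sum_cmult_right[OF mix_split[of x], of "1/xi x"] xx
    by (simp add: q_def[abs_def])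
  have p_nn: "p a \<ge> 0" for a unfolding p_def by (rule divide_nonneg_pos[OF mcyl_nonneg mx])
  have q_nn: "q a \<ge> 0" for a unfolding q_def by (rule divide_nonneg_pos[OF mix_nonneg xx])
  have Vx: "V x \<ge> 0" by (rule V_nonneg)
  have key: "ln (p a / q a) = V x - V (x@[a])" if pos: "m (x@[a]) > 0" for a
  proof -
    have xa: "xi (x@[a]) > 0" using xi_pos[OF pos] .
    have pp: "p a > 0" "q a > 0" using pos mx xa xx by (simp_all add: p_def q_def)
    have r: "xi (x@[a]) / (w \<mu> * m (x@[a])) > 0" using xa pos wmu_pos by simp
    have prod: "(p a / q a) * (xi (x@[a]) / (w \<mu> * m (x@[a]))) = xi x / (w \<mu> * m x)"
      using pos mx xa xx wmu_pos by (simp add: p_def q_def field_simps)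
    have "ln (xi x / (w \<mu> * m x)) = ln (p a / q a) + ln (xi (x@[a]) / (w \<mu> * m (x@[a])))"
      unfolding prod[symmetric] by (rule ln_mult_pos) (use pp r in auto)
    then have "ln (p a / q a) + ln (xi (x@[a]) / (w \<mu> * m (x@[a]))) = ln (xi x / (w \<mu> * m x))"
      by simp
    then show ?thesis unfolding V_def by simp
  qed
  have zero: "p a = 0 \<and> f a = 0" if "\<not> m (x@[a]) > 0" for a
  proof -
    have "m (x@[a]) = 0" using that mcyl_nonneg[of \<mu> "x@[a]"] by simp
    then show ?thesis by (simp add: p_def f_def)
  qed
  have lower: "f a \<ge> p a - q a" for a
  proof (cases "m (x@[a]) > 0")
    case True
    have xa: "xi (x@[a]) > 0" using xi_pos[OF True] .
    have pp: "p a > 0" "q a > 0" using True mx xa xx by (simp_all add: p_def q_def)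
    have "ln (p a / q a) \<ge> 1 - 1 / (p a / q a)" using pp by (intro ln_ge_1_minus_inv) simp
    then have "p a * ln (p a / q a) \<ge> p a * (1 - 1 / (p a / q a))" using pp by (simp add: mult_left_mono)
    also have "p a * (1 - 1 / (p a / q a)) = p a - q a" using pp by (simp add: field_simps)
    finally show ?thesis by (simp add: f_def)
  next
    case False then show ?thesis using zero[OF False] q_nn[of a] by simp
  qed
  have upper: "f a \<le> p a * V x" for a
  proof (cases "m (x@[a]) > 0")
    case True
    have "ln (p a / q a) \<le> V x" using key[OF True] V_nonneg[of "x@[a]"] by simp
    then show ?thesis unfolding f_def using p_nn[of a] by (simp add: mult_left_mono)
  next
    case False then show ?thesis using zero[OF False] Vx by simp
  qed
  have g_has: "((\<lambda>a. p a + q a + p a * V x) has_sum (1 + 1 + 1 * V x)) UNIV"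
    using has_sum_add[OF has_sum_add[OF p_has q_has] has_sum_cmult_left[OF p_has, of "V x"]] by simp
  have "(\<lambda>a. p a + q a + p a * V x) summable_on UNIV" using g_has by (rule has_sum_imp_summable)
  then have "Infinite_Sum.abs_summable_on (\<lambda>a. p a + q a + p a * V x) UNIV"
    by (rule summable_on_iff_abs_summable_on_real[THEN iffD1])
  then have "Infinite_Sum.abs_summable_on f UNIV"
  proof (rule Infinite_Sum.abs_summable_on_comparison_test)
    fix a
    have "\<bar>f a\<bar> \<le> p a + q a + p a * V x"
    proof -
      have "p a * V x \<ge> 0" using p_nn[of a] Vx by (rule mult_nonneg_nonneg)
      then show ?thesis unfolding abs_le_iff using lower[of a] upper[of a] p_nn[of a] q_nn[of a] by linarith
    qed
    then show "norm (f a) \<le> norm (p a + q a + p a * V x)" by simp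
  qed
  then have f_sum: "f summable_on UNIV" by (rule abs_summable_summable)
  then have f_has: "(f has_sum dKL m xi x) UNIV" using d_eq by (simp add: has_sum_infsum)
  have "1 - 1 \<le> dKL m xi x"
    by (rule has_sum_mono[OF has_sum_diff'[OF p_has q_has] f_has]) (use lower in auto)
  then show "dKL m xi x \<ge> 0" by simp
  have eq: "m (x@[a]) * (V (x@[a]) + c) = m x * (p a * (V x + c) - f a)" for a
  proof (cases "m (x@[a]) > 0")
    case True
    have h: "m (x@[a]) = m x * p a" using mx by (simp add: p_def)
    have v: "V (x@[a]) = V x - ln (p a / q a)" using key[OF True] by simp
    show ?thesis unfolding h v f_def by (simp add: algebra_simps)
  next
    case False
    then have "m (x@[a]) = 0" using mcyl_nonneg[of \<mu> "x@[a]"] by simp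
    then show ?thesis using zero[OF False] by simp
  qed
  have "((\<lambda>a. m x * (p a * (V x + c) - f a)) has_sum (m x * (1 * (V x + c) - dKL m xi x))) UNIV"
    using has_sum_cmult_right[OF has_sum_diff'[OF has_sum_cmult_left[OF p_has, of "V x + c"] f_has], of "m x"] by simp
  then show "((\<lambda>a. m (x@[a]) * (V (x@[a]) + c)) has_sum (m x * (V x + c - dKL m xi x))) UNIV"
    by (simp add: eq)
qed

lemma dKL_nonneg: "dKL m xi x \<ge> 0"
proof (cases "m x > 0")
  case True then show ?thesis by (rule node(1))
next
  case False
  then have "m x = 0" using mcyl_nonneg[of \<mu> x] by simp
  then show ?thesis by (simp add: dKL_def)
qed

definition A :: "'a list \<Rightarrow> real" where "A y = (\<Sum>t<length y. dKL m xi (take t y))"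
definition good :: "real \<Rightarrow> 'a list \<Rightarrow> bool" where
  "good T y = (\<forall>t<length y. xi (take t y) \<le> T * m (take t y))"
definition Psi :: "real \<Rightarrow> real \<Rightarrow> real \<Rightarrow> real \<Rightarrow> 'a list \<Rightarrow> ennreal" where
  "Psi T \<theta> c C y = (if good T y then ennreal (exp (\<theta> * A y) * (V y + c) / (c * C) + xi y / (T * m y)) else 1)"

lemma A_snoc: "A (x@[a]) = A x + dKL m xi x"
proof -
  have "A (x@[a]) = (\<Sum>t<Suc (length x). dKL m xi (take t (x@[a])))" by (simp add: A_def)
  also have "\<dots> = (\<Sum>t<length x. dKL m xi (take t (x@[a]))) + dKL m xi x" by simp
  also have "(\<Sum>t<length x. dKL m xi (take t (x@[a]))) = A x"
    unfolding A_def by (rule sum.cong) auto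
  finally show ?thesis .
qed

lemma A_Nil: "A [] = 0" by (simp add: A_def)

lemma good_snoc: "good T (x@[a]) \<longleftrightarrow> good T x \<and> xi x \<le> T * m x"
proof -
  have "good T (x@[a]) \<longleftrightarrow> (\<forall>t<Suc (length x). xi (take t (x@[a])) \<le> T * m (take t (x@[a])))"
    by (simp add: good_def)
  also have "\<dots> \<longleftrightarrow> (\<forall>t<length x. xi (take t (x@[a])) \<le> T * m (take t (x@[a]))) \<and> xi x \<le> T * m x"
    by (auto simp: less_Suc_eq)
  also have "(\<forall>t<length x. xi (take t (x@[a])) \<le> T * m (take t (x@[a]))) \<longleftrightarrow> good T x"
    by (simp add: good_def)
  finally show ?thesis .
qed

lemma step:
  assumes T: "T > 0" and th: "\<theta> > 0" and c: "c > 0" and C: "C > 0"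
    and bound: "\<And>y. m y > 0 \<Longrightarrow> xi y \<le> T * m y \<Longrightarrow> V y + c \<le> 1/\<theta>"
  shows "(\<integral>\<^sup>+a. emeasure \<mu> (cyl (x@[a])) * Psi T \<theta> c C (x@[a]) \<partial>count_space UNIV)
          \<le> emeasure \<mu> (cyl x) * Psi T \<theta> c C x"
proof -
  have E: "emeasure \<mu> (cyl y) = ennreal (m y)" for y by (rule emeasure_cyl[OF muM])
  have split: "(\<integral>\<^sup>+a. ennreal (m (x@[a])) \<partial>count_space UNIV) = ennreal (m x)"
    using emeasure_cyl_split[OF sets_nu[OF muM], of x] by (simp add: E)
  have first_nn: "exp (\<theta> * A y) * (V y + c) / (c * C) \<ge> 0" for y
    using V_nonneg[of y] c C by simp
  show ?thesis
  proof (cases "m x > 0")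
    case False
    then have mx0: "m x = 0" using mcyl_nonneg[of \<mu> x] by simp
    have "m (x@[a]) = 0" for a using mcyl_snoc_le[OF muM, of x a] mcyl_nonneg[of \<mu> "x@[a]"] mx0 by simp
    then show ?thesis by (simp add: E)
  next
    case mx: True
    show ?thesis
    proof (cases "good T x \<and> xi x \<le> T * m x")
      case False
      then have P1: "Psi T \<theta> c C (x@[a]) = 1" for a using False by (auto simp: Psi_def good_snoc)
      have Px: "Psi T \<theta> c C x \<ge> 1"
      proof (cases "good T x")
        case False then show ?thesis by (simp add: Psi_def)
      next
        case True
        with \<open>\<not> (good T x \<and> xi x \<le> T * m x)\<close> have "xi x > T * m x" by simp
        then have "xi x / (T * m x) \<ge> 1" using T mx by simp
        then have "exp (\<theta> * A x) * (V x + c) / (c * C) + xi x / (T * m x) \<ge> 1" using first_nn[of x] by linarith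
        then show ?thesis using True by (simp add: Psi_def)
      qed
      have "(\<integral>\<^sup>+a. emeasure \<mu> (cyl (x@[a])) * Psi T \<theta> c C (x@[a]) \<partial>count_space UNIV) = ennreal (m x)"
        by (simp add: P1 E split)
      also have "\<dots> \<le> ennreal (m x) * Psi T \<theta> c C x"
        using mult_left_mono[OF Px, of "ennreal (m x)"] by simp
      finally show ?thesis by (simp add: E)
    next
      case True
      then have gx: "good T x" and Yx: "xi x \<le> T * m x" by auto
      define d where "d = dKL m xi x"
      define u where "u = V x + c"
      define K1 where "K1 = exp (\<theta> * (A x + d)) / (c * C)"
      have d0: "d \<ge> 0" unfolding d_def by (rule node(1)[OF mx])
      have hsum: "((\<lambda>a. m (x@[a]) * (V (x@[a]) + c)) has_sum (m x * (u - d))) UNIV"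
        unfolding u_def d_def by (rule node(2)[OF mx])
      have tnn: "m (x@[a]) * (V (x@[a]) + c) \<ge> 0" for a
        using mcyl_nonneg[of \<mu> "x@[a]"] V_nonneg[of "x@[a]"] c by simp
      have "m x * (u - d) \<ge> 0" using has_sum_nonneg[OF hsum] tnn by auto
      then have du: "d \<le> u" using mx by (simp add: mult_le_0_iff zero_le_mult_iff)
      have uth: "u \<le> 1/\<theta>" unfolding u_def by (rule bound[OF mx Yx])
      define g where "g a = K1 * (m (x@[a]) * (V (x@[a]) + c)) + xi (x@[a]) / T" for a
      have g_has: "(g has_sum (K1 * (m x * (u - d)) + xi x / T)) UNIV"
      proof -
        have "((\<lambda>a. xi (x@[a]) * (1/T)) has_sum (xi x * (1/T))) UNIV"
          by (rule has_sum_cmult_left[OF mix_split])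
        then have h2: "((\<lambda>a. xi (x@[a]) / T) has_sum (xi x / T)) UNIV" by simp
        show ?thesis unfolding g_def[abs_def] by (rule has_sum_add[OF has_sum_cmult_right[OF hsum] h2])
      qed
      have K1nn: "K1 \<ge> 0" unfolding K1_def using c C by simp
      have g_nn: "g a \<ge> 0" for a unfolding g_def using K1nn tnn[of a] mix_nonneg[of "x@[a]"] T by simp
      have pt: "emeasure \<mu> (cyl (x@[a])) * Psi T \<theta> c C (x@[a]) \<le> ennreal (g a)" for a
      proof -
        have gxa: "good T (x@[a])" using gx Yx by (simp add: good_snoc)
        have "emeasure \<mu> (cyl (x@[a])) * Psi T \<theta> c C (x@[a])
            = ennreal (m (x@[a]) * (exp (\<theta> * A (x@[a])) * (V (x@[a]) + c) / (c * C) + xi (x@[a]) / (T * m (x@[a]))))"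
          using gxa by (simp add: Psi_def E ennreal_mult'[OF mcyl_nonneg])
        also have "\<dots> \<le> ennreal (g a)"
        proof (rule ennreal_leI)
          have e1: "m (x@[a]) * (exp (\<theta> * A (x@[a])) * (V (x@[a]) + c) / (c * C)) = K1 * (m (x@[a]) * (V (x@[a]) + c))"
            unfolding K1_def d_def A_snoc by simp
          have e2: "m (x@[a]) * (xi (x@[a]) / (T * m (x@[a]))) \<le> xi (x@[a]) / T"
          proof (cases "m (x@[a]) = 0")
            case True then show ?thesis using mix_nonneg[of "x@[a]"] T by simp
          next
            case False then show ?thesis by simp
          qed
          show "m (x@[a]) * (exp (\<theta> * A (x@[a])) * (V (x@[a]) + c) / (c * C) + xi (x@[a]) / (T * m (x@[a]))) \<le> g a"
            unfolding g_def using e1 e2 by (simp add: distrib_left)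
        qed
        finally show ?thesis .
      qed
      have "(\<integral>\<^sup>+a. emeasure \<mu> (cyl (x@[a])) * Psi T \<theta> c C (x@[a]) \<partial>count_space UNIV)
          \<le> (\<integral>\<^sup>+a. ennreal (g a) \<partial>count_space UNIV)"
        by (rule nn_integral_mono) (rule pt)
      also have "\<dots> = ennreal (K1 * (m x * (u - d)) + xi x / T)"
        using bridge1[of UNIV g] g_nn has_sum_imp_summable[OF g_has] infsumI[OF g_has] by simp
      also have "\<dots> \<le> ennreal (m x * (exp (\<theta> * A x) * (V x + c) / (c * C) + xi x / (T * m x)))"
      proof (rule ennreal_leI)
        have sc: "exp (\<theta> * d) * (u - d) \<le> u" by (rule scalar_ineq[OF d0 du uth th])
        have "K1 * (m x * (u - d)) = m x * (exp (\<theta> * A x) / (c * C)) * (exp (\<theta> * d) * (u - d))"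
          unfolding K1_def by (simp add: distrib_left exp_add mult_ac)
        also have "\<dots> \<le> m x * (exp (\<theta> * A x) / (c * C)) * u"
          by (rule mult_left_mono[OF sc]) (use mx c C in simp)
        finally have "K1 * (m x * (u - d)) \<le> m x * (exp (\<theta> * A x) * (V x + c) / (c * C))"
          unfolding u_def by simp
        moreover have "xi x / T = m x * (xi x / (T * m x))" using mx by simp
        ultimately show "K1 * (m x * (u - d)) + xi x / T \<le> m x * (exp (\<theta> * A x) * (V x + c) / (c * C) + xi x / (T * m x))"
          by (simp add: distrib_left)
      qed
      also have "\<dots> = emeasure \<mu> (cyl x) * Psi T \<theta> c C x"
        using gx by (simp add: Psi_def E ennreal_mult'[OF mcyl_nonneg])
      finally show ?thesis .
    qed
  qed
qed

lemma expect_decr: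
  assumes T: "T > 0" and th: "\<theta> > 0" and c: "c > 0" and C: "C > 0"
    and bound: "\<And>y. m y > 0 \<Longrightarrow> xi y \<le> T * m y \<Longrightarrow> V y + c \<le> 1/\<theta>"
  shows "(\<integral>\<^sup>+\<omega>. Psi T \<theta> c C (stake (Suc n) \<omega>) \<partial>\<mu>) \<le> (\<integral>\<^sup>+\<omega>. Psi T \<theta> c C (stake n \<omega>) \<partial>\<mu>)"
proof -
  let ?P = "Psi T \<theta> c C"
  have "(\<integral>\<^sup>+\<omega>. ?P (stake (Suc n) \<omega>) \<partial>\<mu>) = (\<integral>\<^sup>+y. ?P y * emeasure \<mu> (cyl y) \<partial>count_space {y. length y = Suc n})"
    by (rule L1[OF sets_nu[OF muM]])
  also have "\<dots> = (\<integral>\<^sup>+x. (\<integral>\<^sup>+a. ?P (x@[a]) * emeasure \<mu> (cyl (x@[a])) \<partial>count_space UNIV) \<partial>count_space {x. length x = n})"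
    by (rule L2)
  also have "\<dots> \<le> (\<integral>\<^sup>+x. ?P x * emeasure \<mu> (cyl x) \<partial>count_space {x. length x = n})"
  proof (rule nn_integral_mono)
    fix x
    show "(\<integral>\<^sup>+a. ?P (x@[a]) * emeasure \<mu> (cyl (x@[a])) \<partial>count_space UNIV) \<le> ?P x * emeasure \<mu> (cyl x)"
      using step[OF T th c C bound, of x] by (simp add: mult.commute)
  qed
  also have "\<dots> = (\<integral>\<^sup>+\<omega>. ?P (stake n \<omega>) \<partial>\<mu>)"
    by (rule L1[OF sets_nu[OF muM], symmetric])
  finally show ?thesis .
qed

lemma expect_bound:
  assumes T: "T > 0" and th: "\<theta> > 0" and c: "c > 0" and C: "C > 0"
    and bound: "\<And>y. m y > 0 \<Longrightarrow> xi y \<le> T * m y \<Longrightarrow> V y + c \<le> 1/\<theta>"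
  shows "(\<integral>\<^sup>+\<omega>. Psi T \<theta> c C (stake n \<omega>) \<partial>\<mu>) \<le> Psi T \<theta> c C []"
proof (induction n)
  case 0
  interpret prob_space \<mu> by (rule prob_nu[OF muM])
  show ?case by (simp add: emeasure_space_1)
next
  case (Suc n)
  then show ?case using expect_decr[OF T th c C bound, of n] by (rule order_trans[rotated])
qed

lemma stake_meas: "stake n \<in> measurable \<mu> (count_space UNIV)"
  using measurable_stake by (subst measurable_cong_sets[OF sets_nu[OF muM] refl])

lemma pred_stake: "{\<omega> \<in> space \<mu>. P (stake n \<omega>)} \<in> sets \<mu>"
proof -
  have "{\<omega> \<in> space \<mu>. P (stake n \<omega>)} = stake n -` {y. P y} \<inter> space \<mu>" by auto
  then show ?thesis using measurable_sets[OF stake_meas, of "{y. P y}"] by simp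
qed

lemma A_stake: "A (stake n \<omega>) = (\<Sum>t<n. dKL m xi (stake t \<omega>))"
  unfolding A_def by (rule sum.cong) (auto simp: take_stake min_def)

lemma Dinf_le_iff: "Dinf m xi \<omega> \<le> ennreal B \<longleftrightarrow> (\<forall>n. ennreal (A (stake n \<omega>)) \<le> ennreal B)"
proof -
  have "Dinf m xi \<omega> = (SUP n. \<Sum>t<n. ennreal (dKL m xi (stake t \<omega>)))"
    unfolding Dinf_def by (rule suminf_eq_SUP)
  also have "\<dots> = (SUP n. ennreal (A (stake n \<omega>)))"
    by (simp add: A_stake dKL_nonneg)
  finally show ?thesis by (simp add: SUP_le_iff)
qed

end

theorem main:
  fixes M :: "('a::countable) stream measure set"
    and w :: "'a stream measure \<Rightarrow> real"
    and \<mu> :: "'a stream measure"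
    and \<delta> :: real
  assumes "countable M"
    and "\<forall>\<nu>\<in>M. prob_space \<nu> \<and> sets \<nu> = sets seq_space"
    and "\<forall>\<nu>\<in>M. 0 < w \<nu> \<and> w \<nu> \<le> 1"
    and "(w has_sum 1) M"
    and "\<mu> \<in> M"
    and d0: "0 < \<delta>" and d1: "\<delta> < 1"
  shows "measure \<mu> {\<omega> \<in> space \<mu>. Dinf (mcyl \<mu>) (mix M w) \<omega>
            \<le> ennreal (exp 1 * ln (6 / \<delta>) * (ln (2 / \<delta>) + ln (1 / w \<mu>)))} \<ge> 1 - \<delta>"
proof -
  interpret sbm M w \<mu> using assms(1-5) by unfold_locales
  interpret P: prob_space \<mu> by (rule prob_nu[OF muM])
  define K where "K = ln (1 / w \<mu>)"
  define L where "L = ln (2 / \<delta>) + K"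
  define T where "T = 2 / \<delta>"
  define \<theta> where "\<theta> = 1 / (2 * L)"
  define B where "B = exp 1 * ln (6 / \<delta>) * L"
  define C where "C = exp (\<theta> * B)"
  have wpos: "w \<mu> > 0" and wle: "w \<mu> \<le> 1" using assms(3,5) by auto
  have K0: "K \<ge> 0" unfolding K_def using wpos wle by simp
  have l2: "ln (2 / \<delta>) > 0" using d0 d1 by simp
  have L0: "L > 0" unfolding L_def using K0 l2 by simp
  have T0: "T > 0" unfolding T_def using d0 by simp
  have th0: "\<theta> > 0" unfolding \<theta>_def using L0 by simp
  have C0: "C > 0" unfolding C_def by simp
  have l6: "ln (6 / \<delta>) > 0" using d0 d1 by simp
  have B0: "B \<ge> 0" unfolding B_def using l6 L0 by simp
  have bound: "V y + L \<le> 1/\<theta>" if my: "m y > 0" and Y: "xi y \<le> T * m y" for y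
  proof -
    have "xi y / (w \<mu> * m y) \<le> T / w \<mu>" using Y my wpos by (simp add: field_simps)
    moreover have "xi y / (w \<mu> * m y) > 0" using xi_pos[OF my] my wpos by simp
    ultimately have "V y \<le> ln (T / w \<mu>)" unfolding V_def by simp
    also have "ln (T / w \<mu>) = ln (2 / \<delta>) + K" unfolding K_def T_def using d0 wpos
      by (simp add: ln_div ln_mult)
    finally show ?thesis unfolding \<theta>_def L_def by simp
  qed
  have Psi0: "Psi T \<theta> L C [] \<le> ennreal \<delta>"
  proof -
    have V0: "V [] = K" unfolding V_def K_def by (simp add: mix_Nil mcyl_Nil[OF muM])
    have "Psi T \<theta> L C [] = ennreal ((K + L) / (L * C) + \<delta> / 2)"
      by (simp add: Psi_def good_def A_Nil V0 mix_Nil mcyl_Nil[OF muM] T_def)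
    also have "\<dots> \<le> ennreal \<delta>"
    proof (rule ennreal_leI)
      have e1: "exp (1::real) \<ge> 2" using exp_ge_add_one_self[of 1] by simp
      have "\<theta> * B = exp 1 * ln (6 / \<delta>) / 2" unfolding \<theta>_def B_def using L0 by simp
      also have "\<dots> \<ge> ln (6 / \<delta>)" using e1 l6 by (simp add: field_simps)
      finally have "C \<ge> exp (ln (6 / \<delta>))" unfolding C_def by simp
      then have C6: "C \<ge> 6 / \<delta>" using d0 by simp
      have KL: "K + L \<le> 2 * L" unfolding L_def using l2 by (simp add: algebra_simps)
      have LC: "L * C > 0" using L0 C0 by simp
      have "(K + L) / (L * C) \<le> (2 * L) / (L * C)" using divide_right_mono[OF KL, of "L * C"] LC by (simp only: less_imp_le)
      also have "\<dots> = 2 / C" using L0 by simp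
      finally have "(K + L) / (L * C) \<le> 2 / C" .
      also have "2 / C \<le> 2 / (6 / \<delta>)" using C6 d0 C0 by (intro divide_left_mono) auto
      also have "\<dots> = \<delta> / 3" by simp
      finally have "(K + L) / (L * C) \<le> \<delta> / 3" .
      then show "(K + L) / (L * C) + \<delta> / 2 \<le> \<delta>" using d0 by linarith
    qed
    finally show ?thesis .
  qed
  define Bad where "Bad n = {\<omega> \<in> space \<mu>. \<not> ennreal (A (stake n \<omega>)) \<le> ennreal B}" for n
  have Bad_sets: "Bad n \<in> sets \<mu>" for n unfolding Bad_def by (rule pred_stake)
  have Bad_inc: "incseq Bad"
  proof (rule incseq_SucI)
    fix n
    have "A (stake n \<omega>) \<le> A (stake (Suc n) \<omega>)" for \<omega>
      by (simp only: stake_Suc A_snoc) (simp add: dKL_nonneg)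
    then show "Bad n \<subseteq> Bad (Suc n)" unfolding Bad_def
    proof safe
      fix \<omega> assume mono: "\<And>\<omega>. A (stake n \<omega>) \<le> A (stake (Suc n) \<omega>)"
        and n1: "\<not> ennreal (A (stake n \<omega>)) \<le> ennreal B"
        and n2: "ennreal (A (stake (Suc n) \<omega>)) \<le> ennreal B"
      have "ennreal (A (stake n \<omega>)) \<le> ennreal B" using ennreal_leI[OF mono[of \<omega>]] n2 by (rule order_trans)
      with n1 show False by simp
    qed
  qed
  have Bad_le: "emeasure \<mu> (Bad n) \<le> ennreal \<delta>" for n
  proof -
    have ind: "indicator (Bad n) \<omega> \<le> Psi T \<theta> L C (stake n \<omega>)" for \<omega>
    proof (cases "\<omega> \<in> Bad n")
      case False then show ?thesis by simp
    next
      case True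
      have AB: "A (stake n \<omega>) > B"
      proof (rule ccontr)
        assume "\<not> A (stake n \<omega>) > B"
        then have "ennreal (A (stake n \<omega>)) \<le> ennreal B" by (intro ennreal_leI) simp
        with True show False by (simp add: Bad_def)
      qed
      show ?thesis
      proof (cases "good T (stake n \<omega>)")
        case False then show ?thesis using True by (simp add: Psi_def)
      next
        case g: True
        let ?y = "stake n \<omega>"
        have "exp (\<theta> * A ?y) \<ge> C" unfolding C_def using AB th0 by simp
        moreover have "L \<le> V ?y + L" using V_nonneg[of ?y] by simp
        ultimately have "C * L \<le> exp (\<theta> * A ?y) * (V ?y + L)"
          using C0 L0 by (intro mult_mono) auto
        moreover have LC: "L * C > 0" using L0 C0 by simp
        ultimately have "exp (\<theta> * A ?y) * (V ?y + L) / (L * C) \<ge> 1"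
          by (simp add: le_divide_eq mult.commute)
        moreover have "xi ?y / (T * m ?y) \<ge> 0" using mix_nonneg[of ?y] mcyl_nonneg[of \<mu> ?y] T0 by (intro divide_nonneg_nonneg mult_nonneg_nonneg) auto
        ultimately have "exp (\<theta> * A ?y) * (V ?y + L) / (L * C) + xi ?y / (T * m ?y) \<ge> 1" by linarith
        then show ?thesis using True g by (simp add: Psi_def)
      qed
    qed
    have "emeasure \<mu> (Bad n) = (\<integral>\<^sup>+\<omega>. indicator (Bad n) \<omega> \<partial>\<mu>)" using Bad_sets by simp
    also have "\<dots> \<le> (\<integral>\<^sup>+\<omega>. Psi T \<theta> L C (stake n \<omega>) \<partial>\<mu>)" by (rule nn_integral_mono) (rule ind)
    also have "\<dots> \<le> Psi T \<theta> L C []" by (rule expect_bound[OF T0 th0 L0 C0 bound])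
    also have "\<dots> \<le> ennreal \<delta>" by (rule Psi0)
    finally show ?thesis .
  qed
  have U_sets: "(\<Union>n. Bad n) \<in> sets \<mu>" using Bad_sets by auto
  have "emeasure \<mu> (\<Union>n. Bad n) = (SUP n. emeasure \<mu> (Bad n))"
    by (rule SUP_emeasure_incseq[symmetric]) (use Bad_sets Bad_inc in auto)
  also have "\<dots> \<le> ennreal \<delta>" by (rule SUP_least) (rule Bad_le)
  finally have "emeasure \<mu> (\<Union>n. Bad n) \<le> ennreal \<delta>" .
  then have mU: "measure \<mu> (\<Union>n. Bad n) \<le> \<delta>"
    using d0 by (simp add: P.emeasure_eq_measure)
  have eqset: "{\<omega> \<in> space \<mu>. Dinf (mcyl \<mu>) (mix M w) \<omega> \<le> ennreal B} = space \<mu> - (\<Union>n. Bad n)"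
    by (auto simp: Bad_def Dinf_le_iff)
  have "measure \<mu> (space \<mu> - (\<Union>n. Bad n)) = 1 - measure \<mu> (\<Union>n. Bad n)"
    by (rule P.prob_compl[OF U_sets])
  moreover have "B = exp 1 * ln (6 / \<delta>) * (ln (2 / \<delta>) + ln (1 / w \<mu>))"
    unfolding B_def L_def K_def ..
  ultimately show ?thesis using eqset mU by simp
qed



theorem theorem3:
  fixes M :: "('a::countable) stream measure set"
    and w :: "'a stream measure \<Rightarrow> real"
    and \<mu> :: "'a stream measure"
    and \<delta> :: real
  assumes "countable M"
    and "\<forall>\<nu>\<in>M. prob_space \<nu> \<and> sets \<nu> = sets seq_space"
    and "\<forall>\<nu>\<in>M. 0 < w \<nu> \<and> w \<nu> \<le> 1"
    and "(w has_sum 1) M"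
    and "\<mu> \<in> M"
    and "0 < \<delta>" and "\<delta> < 1"
  shows "measure \<mu> {\<omega> \<in> space \<mu>. Dinf (mcyl \<mu>) (mix M w) \<omega>
            \<le> ennreal (exp 1 * ln (6 / \<delta>) * (ln (2 / \<delta>) + ln (1 / w \<mu>)))} \<ge> 1 - \<delta>"
  using assms by (rule main)

end
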